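(* Let $V$ be a finite set, $f:2^V\to\mathbb{R}_+$ nonnegative submodular with $f(\emptyset)=0$, $t_1,\ldots,t_k\in V$ distinct, and $\mathbf{x}=(x_{i,j})_{i\in[k],j\in V}$ with $x_{i,j}\ge0$, $\sum_{i=1}^k x_{i,j}=1$ for all $j\in V$, and $x_{i,t_i}=1$ for all $i$. For $\theta\in[0,1]$ let $A_i(\theta)=\{j: x_{i,j}>\theta\}$, $A(\theta)=\bigcup_{i=1}^k A_i(\theta)$ and $U(\theta)=V\setminus A(\theta)$. Then for any $\delta\in[\tfrac12,1]$, $$\sum_{i=1}^{k-1}\int_0^\delta f\big((A_1(\theta)\cup\cdots\cup A_i(\theta))\cap A_{i+1}(\theta)\big)\,d\theta\ \ge\ \int_0^1 f(U(\theta))\,d\theta.$$ *)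

theory Defs
  imports "HOL-Analysis.Analysis"
begin

definition submodular_on :: "'a set \<Rightarrow> ('a set \<Rightarrow> real) \<Rightarrow> bool" where
  "submodular_on V f \<longleftrightarrow>
     (\<forall>S T. S \<subseteq> V \<longrightarrow> T \<subseteq> V \<longrightarrow> f (S \<union> T) + f (S \<inter> T) \<le> f S + f T)"

definition thr_set :: "'a set \<Rightarrow> (nat \<Rightarrow> 'a \<Rightarrow> real) \<Rightarrow> nat \<Rightarrow> real \<Rightarrow> 'a set" where
  "thr_set V x i \<theta> = {j \<in> V. x i j > \<theta>}"

end

theory Submission
  imports Defs
begin


lemma ind_gt:
  fixes g B :: real assumes "0 \<le> g" "g \<le> B"
  shows "((\<lambda>\<theta>. if g > \<theta> then 1 else 0::real) has_integral g) {0..B}"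
proof -
  have 1: "((\<lambda>\<theta>. if g > \<theta> then 1 else 0::real) has_integral g) {0..g}"
  proof (rule has_integral_spike_finite[where S="{g}" and f="\<lambda>_. 1"])
    show "((\<lambda>_. 1::real) has_integral g) {0..g}"
      using has_integral_const_real[of "1::real" 0 g] assms by simp
  qed auto
  have 2: "((\<lambda>\<theta>. if g > \<theta> then 1 else 0::real) has_integral 0) {g..B}"
  proof (rule has_integral_spike_finite[where S="{}" and f="\<lambda>_. 0"])
  qed auto
  from has_integral_combine[OF assms 1 2] show ?thesis by simp
qed

lemma ind_le:
  fixes m :: real assumes "0 \<le> m" "m \<le> 1"
  shows "((\<lambda>\<theta>. if m \<le> \<theta> then 1 else 0::real) has_integral (1 - m)) {0..1}"
proof -
  have 1: "((\<lambda>\<theta>. if m \<le> \<theta> then 1 else 0::real) has_integral 0) {0..m}"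
  proof (rule has_integral_spike_finite[where S="{m}" and f="\<lambda>_. 0"])
  qed auto
  have 2: "((\<lambda>\<theta>. if m \<le> \<theta> then 1 else 0::real) has_integral (1-m)) {m..1}"
  proof (rule has_integral_spike_finite[where S="{}" and f="\<lambda>_. 1"])
    show "((\<lambda>_. 1::real) has_integral (1-m)) {m..1}"
      using has_integral_const_real[of "1::real" m 1] assms by simp
  qed auto
  from has_integral_combine[OF assms 1 2] show ?thesis by simp
qed

lemma greedy_chain:
  assumes sub: "submodular_on V f" and f0: "f {} = 0"
  shows "distinct vs \<Longrightarrow> set vs \<subseteq> V \<Longrightarrow> \<exists>y. (\<forall>S\<subseteq>set vs. sum y S \<le> f S) \<and> (\<forall>m. sum y (set (take m vs)) = f (set (take m vs)))"
proof (induction vs rule: rev_induct)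
  case Nil
  show ?case by (rule exI[of _ "\<lambda>_. 0"]) (auto simp: f0)
next
  case (snoc v vs)
  then have d: "distinct vs" "v \<notin> set vs" "set vs \<subseteq> V" "v \<in> V" by auto
  from snoc.IH[OF d(1,3)] obtain y where y1: "\<forall>S\<subseteq>set vs. sum y S \<le> f S"
    and y2: "\<forall>m. sum y (set (take m vs)) = f (set (take m vs))" by blast
  define y' where "y' = y(v := f (insert v (set vs)) - f (set vs))"
  have A: "sum y' S = sum y S" if "S \<subseteq> set vs" for S
    using that d(2) by (auto simp: y'_def intro!: sum.cong)
  have yv: "sum y (set vs) = f (set vs)" using y2[rule_format, of "length vs"] by simp
  show ?case
  proof (intro exI[of _ y'] conjI allI impI)
    fix S assume S: "S \<subseteq> set (vs @ [v])"
    show "sum y' S \<le> f S"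
    proof (cases "v \<in> S")
      case True
      have fin: "finite S" using S finite_subset by auto
      have "sum y' S = y' v + sum y' (S - {v})" using sum.remove[OF fin True] by simp
      also have "\<dots> = f (insert v (set vs)) - f (set vs) + sum y (S - {v})"
        using A[of "S - {v}"] S by (auto simp: y'_def)
      also have "\<dots> \<le> f (insert v (set vs)) - f (set vs) + f (S - {v})"
      proof -
        have "S - {v} \<subseteq> set vs" using S by auto
        then show ?thesis using y1 by auto
      qed
      also have "\<dots> \<le> f S"
      proof -
        have "f (S \<union> set vs) + f (S \<inter> set vs) \<le> f S + f (set vs)"
          using sub S d unfolding submodular_on_def by auto
        moreover have "S \<union> set vs = insert v (set vs)" using S True by auto
        moreover have "S \<inter> set vs = S - {v}" using S d(2) by auto
        ultimately show ?thesis by simp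
      qed
      finally show ?thesis .
    next
      case False
      then have "S \<subseteq> set vs" using S by auto
      then show ?thesis using A y1 by auto
    qed
  next
    fix m
    show "sum y' (set (take m (vs @ [v]))) = f (set (take m (vs @ [v])))"
    proof (cases "m \<le> length vs")
      case True
      then have "take m (vs @ [v]) = take m vs" by simp
      then show ?thesis using A[of "set (take m vs)"] y2 by (simp add: set_take_subset)
    next
      case False
      then have "take m (vs @ [v]) = vs @ [v]" by simp
      then show ?thesis using d(2) A[of "set vs"] yv by (simp add: y'_def)
    qed
  qed
qed

lemma sorted_prefix:
  "sorted_wrt R vs \<Longrightarrow> (\<forall>u v. R u v \<longrightarrow> P v \<longrightarrow> P u) \<Longrightarrow>
   {v\<in>set vs. P v} = set (take (length (takeWhile P vs)) vs)"
proof (induction vs)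
  case Nil then show ?case by simp
next
  case (Cons a vs)
  show ?case
  proof (cases "P a")
    case True
    then show ?thesis using Cons by auto
  next
    case False
    then have "\<forall>v\<in>set vs. \<not> P v" using Cons.prems by auto
    then show ?thesis using False by auto
  qed
qed

lemma sorted_exists:
  fixes r :: "'a \<Rightarrow> real"
  assumes "finite V"
  shows "\<exists>vs. distinct vs \<and> set vs = V \<and> sorted_wrt (\<lambda>u v. r u \<le> r v) vs"
proof -
  obtain xs where xs: "distinct xs" "set xs = V" using finite_distinct_list[OF assms] by blast
  let ?vs = "sort_key r xs"
  have "sorted (map r ?vs)" by simp
  then have "sorted_wrt (\<lambda>u v. r u \<le> r v) ?vs" by (simp add: sorted_wrt_map)
  then show ?thesis using xs by (intro exI[of _ ?vs]) auto
qed

lemma level_integral: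
  assumes fin: "finite V" and sub: "submodular_on V f" and f0: "f {} = 0"
    and ind: "\<forall>j\<in>V. ((\<lambda>\<theta>. if Q \<theta> j then 1 else 0::real) has_integral w j) {a..b}"
    and vs: "distinct vs" "set vs = V"
    and chain: "\<forall>\<theta>. \<exists>m. {j\<in>V. Q \<theta> j} = set (take m vs)"
  shows "\<exists>y. (\<forall>S\<subseteq>V. sum y S \<le> f S) \<and> ((\<lambda>\<theta>. f {j\<in>V. Q \<theta> j}) has_integral (\<Sum>j\<in>V. y j * w j)) {a..b}"
proof -
  obtain y where y1: "\<forall>S\<subseteq>V. sum y S \<le> f S" and y2: "\<forall>m. sum y (set (take m vs)) = f (set (take m vs))"
    using greedy_chain[OF sub f0 vs(1)] vs(2) by auto
  have eq: "f {j\<in>V. Q \<theta> j} = (\<Sum>j\<in>V. y j * (if Q \<theta> j then 1 else 0))" for \<theta>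
  proof -
    obtain m where "{j\<in>V. Q \<theta> j} = set (take m vs)" using chain by blast
    then have "f {j\<in>V. Q \<theta> j} = sum y {j\<in>V. Q \<theta> j}" using y2 by simp
    also have "\<dots> = (\<Sum>j\<in>V. y j * (if Q \<theta> j then 1 else 0))"
      using fin by (simp add: sum.inter_filter[symmetric] if_distrib cong: if_cong)
    finally show ?thesis .
  qed
  have "((\<lambda>\<theta>. \<Sum>j\<in>V. y j * (if Q \<theta> j then 1 else 0)) has_integral (\<Sum>j\<in>V. y j * w j)) {a..b}"
    using fin ind by (intro has_integral_sum has_integral_mult_right) auto
  then show ?thesis using y1 eq by (intro exI[of _ y]) simp
qed

lemma level_lower:
  assumes fin: "finite V" and y: "\<forall>S\<subseteq>V. sum y S \<le> f S"
    and ind: "\<forall>j\<in>V. ((\<lambda>\<theta>. if Q \<theta> j then 1 else 0::real) has_integral w j) {a..b}"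
    and int: "((\<lambda>\<theta>. f {j\<in>V. Q \<theta> j}) has_integral I) {a..b}"
  shows "(\<Sum>j\<in>V. y j * w j) \<le> I"
proof -
  have h: "((\<lambda>\<theta>. \<Sum>j\<in>V. y j * (if Q \<theta> j then 1 else 0)) has_integral (\<Sum>j\<in>V. y j * w j)) {a..b}"
    using fin ind by (intro has_integral_sum has_integral_mult_right) auto
  show ?thesis
  proof (rule has_integral_le[OF h int])
    fix \<theta>
    have "(\<Sum>j\<in>V. y j * (if Q \<theta> j then 1 else 0)) = sum y {j\<in>V. Q \<theta> j}"
      using fin by (simp add: sum.inter_filter[symmetric] if_distrib cong: if_cong)
    also have "\<dots> \<le> f {j\<in>V. Q \<theta> j}" using y by auto
    finally show "(\<Sum>j\<in>V. y j * (if Q \<theta> j then 1 else 0)) \<le> f {j\<in>V. Q \<theta> j}" .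
  qed
qed


primrec Mx :: "(nat \<Rightarrow> 'a \<Rightarrow> real) \<Rightarrow> nat \<Rightarrow> 'a \<Rightarrow> real" where
  "Mx x 0 j = 0"
| "Mx x (Suc i) j = max (Mx x i j) (x (Suc i) j)"

lemma Mx_gt: "0 \<le> \<theta> \<Longrightarrow> (Mx x i j > \<theta>) \<longleftrightarrow> (\<exists>l\<in>{1..i}. x l j > \<theta>)"
proof (induction i)
  case 0 then show ?case by simp
next
  case (Suc i)
  have "(\<exists>l\<in>{1..Suc i}. x l j > \<theta>) \<longleftrightarrow> (\<exists>l\<in>{1..i}. x l j > \<theta>) \<or> x (Suc i) j > \<theta>"
  proof
    assume "\<exists>l\<in>{1..Suc i}. x l j > \<theta>" then show "(\<exists>l\<in>{1..i}. x l j > \<theta>) \<or> x (Suc i) j > \<theta>"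
      by (auto simp: le_Suc_eq)
  next
    assume "(\<exists>l\<in>{1..i}. x l j > \<theta>) \<or> x (Suc i) j > \<theta>"
    then show "\<exists>l\<in>{1..Suc i}. x l j > \<theta>"
    proof
      assume "x (Suc i) j > \<theta>" then show ?thesis by (intro bexI[of _ "Suc i"]) auto
    qed auto
  qed
  then show ?case using Suc by auto
qed

lemma Mx_nonneg: "0 \<le> Mx x i j"
  by (induction i) auto

lemma Mx_le_sum:
  assumes "\<forall>l\<in>{1..k}. 0 \<le> x l j"
  shows "i \<le> k \<Longrightarrow> Mx x i j \<le> (\<Sum>l=1..i. x l j)"
proof (induction i)
  case 0 then show ?case by simp
next
  case (Suc i)
  have x: "0 \<le> x (Suc i) j" using assms Suc.prems by auto
  have s: "0 \<le> (\<Sum>l=1..i. x l j)" using assms Suc.prems by (intro sum_nonneg) auto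
  show ?case using Suc x s by (simp add: sum.cl_ivl_Suc)
qed

lemma Mx_tele:
  assumes "\<forall>l\<in>{1..k}. 0 \<le> x l j"
  shows "Suc i \<le> k \<Longrightarrow> (\<Sum>l=1..Suc i. x l j) - Mx x (Suc i) j = (\<Sum>l=1..i. min (Mx x l j) (x (Suc l) j))"
proof (induction i)
  case 0
  have "0 \<le> x 1 j" using assms 0 by auto
  then show ?case by simp
next
  case (Suc i)
  then have IH: "(\<Sum>l=1..Suc i. x l j) - Mx x (Suc i) j = (\<Sum>l=1..i. min (Mx x l j) (x (Suc l) j))" by simp
  have "(\<Sum>l=1..Suc (Suc i). x l j) = (\<Sum>l=1..Suc i. x l j) + x (Suc (Suc i)) j"
    by (simp add: sum.cl_ivl_Suc)
  moreover have "(\<Sum>l=1..Suc i. min (Mx x l j) (x (Suc l) j)) = (\<Sum>l=1..i. min (Mx x l j) (x (Suc l) j)) + min (Mx x (Suc i) j) (x (Suc (Suc i)) j)"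
    by (simp add: sum.cl_ivl_Suc)
  ultimately show ?case using IH by (simp add: max_def min_def)
qed

theorem lemma4:
  fixes V :: "'a set" and f :: "'a set \<Rightarrow> real" and k :: nat
    and t :: "nat \<Rightarrow> 'a" and x :: "nat \<Rightarrow> 'a \<Rightarrow> real" and \<delta> :: real
  assumes "finite V"
    and "\<forall>S. S \<subseteq> V \<longrightarrow> f S \<ge> 0"
    and "submodular_on V f"
    and "f {} = 0"
    and "\<forall>i\<in>{1..k}. t i \<in> V"
    and "inj_on t {1..k}"
    and "\<forall>i\<in>{1..k}. \<forall>j\<in>V. x i j \<ge> 0"
    and "\<forall>j\<in>V. (\<Sum>i=1..k. x i j) = 1"
    and "\<forall>i\<in>{1..k}. x i (t i) = 1"
    and "1/2 \<le> \<delta>" and "\<delta> \<le> 1"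
  shows "(\<Sum>i=1..k-1. integral {0..\<delta>}
            (\<lambda>\<theta>. f ((\<Union>l\<in>{1..i}. thr_set V x l \<theta>) \<inter> thr_set V x (i+1) \<theta>)))
         \<ge> integral {0..1} (\<lambda>\<theta>. f (V - (\<Union>i\<in>{1..k}. thr_set V x i \<theta>)))"
proof -
  note fin = assms(1) and sub = assms(3) and f0 = assms(4)
  have xnn: "\<forall>l\<in>{1..k}. 0 \<le> x l j" if "j \<in> V" for j using assms(7) that by auto
  have Sle: "(\<Sum>l=1..i. x l j) \<le> 1" if "j \<in> V" "i \<le> k" for i j
  proof -
    have "(\<Sum>l=1..i. x l j) \<le> (\<Sum>l=1..k. x l j)"
      using xnn[OF that(1)] that(2) by (intro sum_mono2) auto
    then show ?thesis using assms(8) that(1) by simp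
  qed
  define g where "g i j = min (Mx x i j) (x (Suc i) j)" for i j
  define M where "M j = Mx x k j" for j
  have M01: "0 \<le> M j \<and> M j \<le> 1" if "j \<in> V" for j
    using Mx_nonneg Mx_le_sum[where k=k and x=x and j=j, OF xnn[OF that], of k] Sle[OF that, of k] by (simp add: M_def)
  obtain vs where vs: "distinct vs" "set vs = V" "sorted_wrt (\<lambda>u v. M u \<le> M v) vs"
    using sorted_exists[OF fin, where r=M] by blast
  have chainR: "\<forall>\<theta>. \<exists>m. {j\<in>V. M j \<le> \<theta>} = set (take m vs)"
  proof
    fix \<theta>
    show "\<exists>m. {j\<in>V. M j \<le> \<theta>} = set (take m vs)"
    proof -
      have "{v\<in>set vs. M v \<le> \<theta>} = set (take (length (takeWhile (\<lambda>v. M v \<le> \<theta>) vs)) vs)"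
        by (rule sorted_prefix[OF vs(3)]) auto
      then show ?thesis using vs(2) by (intro exI) simp
    qed
  qed
  have indR: "\<forall>j\<in>V. ((\<lambda>\<theta>. if M j \<le> \<theta> then 1 else 0::real) has_integral (1 - M j)) {0..1}"
    using ind_le M01 by blast
  obtain y where y1: "\<forall>S\<subseteq>V. sum y S \<le> f S"
    and y2: "((\<lambda>\<theta>. f {j\<in>V. M j \<le> \<theta>}) has_integral (\<Sum>j\<in>V. y j * (1 - M j))) {0..1}"
    using level_integral[OF fin sub f0 indR vs(1,2) chainR] by blast
  have "((\<lambda>\<theta>. f (V - (\<Union>i\<in>{1..k}. thr_set V x i \<theta>))) has_integral (\<Sum>j\<in>V. y j * (1 - M j))) {0..1}"
  proof (rule has_integral_spike_finite[where S="{}", OF _ _ y2])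
    fix \<theta> assume "\<theta> \<in> {0..1::real} - {}"
    then have "0 \<le> \<theta>" by auto
    then have Mle: "M j \<le> \<theta> \<longleftrightarrow> (\<forall>l\<in>{1..k}. x l j \<le> \<theta>)" for j
      using Mx_gt[of \<theta> x k j] unfolding M_def by (meson not_le)
    have "V - (\<Union>i\<in>{1..k}. thr_set V x i \<theta>) = {j\<in>V. M j \<le> \<theta>}"
      using Mle by (auto simp: thr_set_def not_less)
    then show "f (V - (\<Union>i\<in>{1..k}. thr_set V x i \<theta>)) = f {j\<in>V. M j \<le> \<theta>}" by simp
  qed auto
  then have RHS: "integral {0..1} (\<lambda>\<theta>. f (V - (\<Union>i\<in>{1..k}. thr_set V x i \<theta>))) = (\<Sum>j\<in>V. y j * (1 - M j))"
    by (rule integral_unique)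
  have LHSi: "(\<Sum>j\<in>V. y j * g i j) \<le> integral {0..\<delta>}
            (\<lambda>\<theta>. f ((\<Union>l\<in>{1..i}. thr_set V x l \<theta>) \<inter> thr_set V x (i+1) \<theta>))"
    if i: "i \<in> {1..k-1}" for i
  proof -
    have g01: "0 \<le> g i j \<and> g i j \<le> \<delta>" if "j \<in> V" for j
    proof -
      have a: "0 \<le> x (Suc i) j" using xnn[OF that] i by auto
      have "Mx x i j \<le> (\<Sum>l=1..i. x l j)" using Mx_le_sum[where k=k and x=x and j=j, OF xnn[OF that], of i] i by auto
      moreover have "(\<Sum>l=1..Suc i. x l j) \<le> 1" using Sle[OF that, of "Suc i"] i by auto
      moreover have "(\<Sum>l=1..Suc i. x l j) = (\<Sum>l=1..i. x l j) + x (Suc i) j"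
        by (simp add: sum.cl_ivl_Suc)
      ultimately have "Mx x i j + x (Suc i) j \<le> 1" by linarith
      then show ?thesis using a Mx_nonneg[of x i j] assms(10) by (auto simp: g_def min_def)
    qed
    have indL: "\<forall>j\<in>V. ((\<lambda>\<theta>. if g i j > \<theta> then 1 else 0::real) has_integral g i j) {0..\<delta>}"
      using ind_gt g01 by blast
    obtain ws where ws: "distinct ws" "set ws = V" "sorted_wrt (\<lambda>u v. - g i u \<le> - g i v) ws"
      using sorted_exists[OF fin, where r="\<lambda>u. - g i u"] by blast
    have chainL: "\<forall>\<theta>. \<exists>m. {j\<in>V. g i j > \<theta>} = set (take m ws)"
    proof
      fix \<theta>
      show "\<exists>m. {j\<in>V. g i j > \<theta>} = set (take m ws)"
      proof -
        have "{v\<in>set ws. g i v > \<theta>} = set (take (length (takeWhile (\<lambda>v. g i v > \<theta>) ws)) ws)"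
          by (rule sorted_prefix[OF ws(3)]) auto
        then show ?thesis using ws(2) by (intro exI) simp
      qed
    qed
    obtain y' I where I: "((\<lambda>\<theta>. f {j\<in>V. g i j > \<theta>}) has_integral I) {0..\<delta>}"
      using level_integral[OF fin sub f0 indL ws(1,2) chainL] by blast
    have le: "(\<Sum>j\<in>V. y j * g i j) \<le> I"
      using level_lower[OF fin y1 indL I] .
    have "((\<lambda>\<theta>. f ((\<Union>l\<in>{1..i}. thr_set V x l \<theta>) \<inter> thr_set V x (i+1) \<theta>)) has_integral I) {0..\<delta>}"
    proof (rule has_integral_spike_finite[where S="{}", OF _ _ I])
      fix \<theta> assume "\<theta> \<in> {0..\<delta>} - {}"
      then have "0 \<le> \<theta>" by auto
      then have "(\<Union>l\<in>{1..i}. thr_set V x l \<theta>) \<inter> thr_set V x (i+1) \<theta> = {j\<in>V. g i j > \<theta>}"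
        using Mx_gt[of \<theta> x i] by (auto simp: thr_set_def g_def)
      then show "f ((\<Union>l\<in>{1..i}. thr_set V x l \<theta>) \<inter> thr_set V x (i+1) \<theta>) = f {j\<in>V. g i j > \<theta>}" by simp
    qed auto
    from integral_unique[OF this] show ?thesis using le by simp
  qed
  have tele: "1 - M j = (\<Sum>i=1..k-1. g i j)" if "j \<in> V" for j
  proof -
    have "k \<noteq> 0"
    proof
      assume "k = 0" then show False using assms(8) that by simp
    qed
    then obtain k' where k: "k = Suc k'" by (cases k) auto
    have "1 - M j = (\<Sum>l=1..Suc k'. x l j) - Mx x (Suc k') j"
      using assms(8) that k by (simp add: M_def)
    also have "\<dots> = (\<Sum>l=1..k'. g l j)"
      using Mx_tele[where k=k and x=x and j=j, OF xnn[OF that], of k'] k by (simp add: g_def)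
    finally show ?thesis using k by simp
  qed
  have "(\<Sum>j\<in>V. y j * (1 - M j)) = (\<Sum>j\<in>V. \<Sum>i=1..k-1. y j * g i j)"
    using tele by (simp add: sum_distrib_left)
  also have "\<dots> = (\<Sum>i=1..k-1. \<Sum>j\<in>V. y j * g i j)" by (rule sum.swap)
  also have "\<dots> \<le> (\<Sum>i=1..k-1. integral {0..\<delta>}
            (\<lambda>\<theta>. f ((\<Union>l\<in>{1..i}. thr_set V x l \<theta>) \<inter> thr_set V x (i+1) \<theta>)))"
    by (rule sum_mono) (rule LHSi)
  finally show ?thesis using RHS by simp
qed

end
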